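(* Let $f:\{0,1\}^n\to\mathbb{R}$ and suppose $\{x,x+\mathbf{e}_i,x+\mathbf{e}_j,x+\mathbf{e}_i+\mathbf{e}_j\}$ is a violated square of $f$. Then it is possible to decrease all the values of $f$ either on $\{y: y\le x\}$ or on $\{y : y \ge x+\mathbf{e}_i+\mathbf{e}_j\}$ by a common constant so that, in the resulting function, the square $\{x,x+\mathbf{e}_i,x+\mathbf{e}_j,x+\mathbf{e}_i+\mathbf{e}_j\}$ is no longer violated and no square that was not violated in $f$ becomes violated.
   Context: $\mathbf{e}_i$ denotes the $i$-th standard basis vector of $\{0,1\}^n$ and $\le$ is the coordinatewise order. A square is a set $\{x, x+\mathbf{e}_i, x+\mathbf{e}_j, x+\mathbf{e}_i+\mathbf{e}_j\}$ with $i\neq j$, $x_i=x_j=0$; it is violated (for $f$) if $f(x)+f(x+\mathbf{e}_i+\mathbf{e}_j) > f(x+\mathbf{e}_i)+f(x+\mathbf{e}_j)$. *)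

theory Defs
  imports Main "HOL.Real"
begin

text \<open>The order on
  functions is the pointwise (coordinatewise) order from Main.\<close>

definition cube :: "nat \<Rightarrow> (nat \<Rightarrow> nat) set" where
  "cube n = {x. (\<forall>k<n. x k \<le> 1) \<and> (\<forall>k\<ge>n. x k = 0)}"

definition unitv :: "nat \<Rightarrow> nat \<Rightarrow> nat" where
  "unitv i = (\<lambda>k. if k = i then 1 else 0)"

definition vadd :: "(nat \<Rightarrow> nat) \<Rightarrow> (nat \<Rightarrow> nat) \<Rightarrow> nat \<Rightarrow> nat" (infixl "\<oplus>" 65) where
  "x \<oplus> y = (\<lambda>k. x k + y k)"

text \<open>The square {x, x+e_i, x+e_j, x+e_i+e_j} in {0,1}^n (i ~= j, x_i = x_j = 0).\<close>
definition is_square :: "nat \<Rightarrow> (nat \<Rightarrow> nat) \<Rightarrow> nat \<Rightarrow> nat \<Rightarrow> bool" where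
  "is_square n x i j \<longleftrightarrow> x \<in> cube n \<and> i < n \<and> j < n \<and> i \<noteq> j \<and> x i = 0 \<and> x j = 0"

definition violated :: "((nat \<Rightarrow> nat) \<Rightarrow> real) \<Rightarrow> (nat \<Rightarrow> nat) \<Rightarrow> nat \<Rightarrow> nat \<Rightarrow> bool" where
  "violated f x i j \<longleftrightarrow>
     f x + f (x \<oplus> unitv i \<oplus> unitv j) > f (x \<oplus> unitv i) + f (x \<oplus> unitv j)"

end

theory Submission
  imports Defs
begin

lemma le_add_unit: "(y::nat\<Rightarrow>nat) \<le> y \<oplus> unitv i"
  by (simp add: le_fun_def vadd_def)

lemma sq_cube:
  assumes "is_square n x i j"
  shows "x \<in> cube n" "x \<oplus> unitv i \<in> cube n" "x \<oplus> unitv j \<in> cube n"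
        "x \<oplus> unitv i \<oplus> unitv j \<in> cube n"
  using assms by (auto simp: is_square_def cube_def vadd_def unitv_def)

lemma both_le:
  assumes "i \<noteq> j" "x \<oplus> unitv i \<le> z" "x \<oplus> unitv j \<le> z"
  shows "x \<oplus> unitv i \<oplus> unitv j \<le> (z::nat\<Rightarrow>nat)"
  unfolding le_fun_def
proof
  fix k
  have a: "x k + unitv i k \<le> z k" "x k + unitv j k \<le> z k"
    using assms(2,3) by (auto simp: le_fun_def vadd_def)
  show "(x \<oplus> unitv i \<oplus> unitv j) k \<le> z k"
    using a assms(1) by (auto simp: vadd_def unitv_def split: if_splits)
qed

theorem lemma2:
  fixes n :: nat and f :: "(nat \<Rightarrow> nat) \<Rightarrow> real" and x :: "nat \<Rightarrow> nat" and i j :: nat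
  assumes "is_square n x i j" and "violated f x i j"
  shows "\<exists>c::real. c > 0 \<and>
     (\<exists>D \<in> {{y \<in> cube n. y \<le> x}, {y \<in> cube n. x \<oplus> unitv i \<oplus> unitv j \<le> y}}.
        let g = (\<lambda>y. if y \<in> D then f y - c else f y) in
          \<not> violated g x i j \<and>
          (\<forall>x' i' j'. is_square n x' i' j' \<and> \<not> violated f x' i' j' \<longrightarrow> \<not> violated g x' i' j'))"
proof -
  define D where "D = {y \<in> cube n. y \<le> x}"
  define c where "c = f x + f (x \<oplus> unitv i \<oplus> unitv j) - f (x \<oplus> unitv i) - f (x \<oplus> unitv j)"
  define g where "g = (\<lambda>y. if y \<in> D then f y - c else f y)"
  have cpos: "c > 0" using assms(2) by (simp add: violated_def c_def)
  have ij: "i \<noteq> j" using assms(1) by (simp add: is_square_def)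
  have notle: "\<not> x \<oplus> unitv i \<le> x" for i
  proof
    assume "x \<oplus> unitv i \<le> x"
    hence "x i + unitv i i \<le> x i" by (auto simp: le_fun_def vadd_def)
    thus False by (simp add: unitv_def)
  qed
  have notle2: "\<not> x \<oplus> unitv i \<oplus> unitv j \<le> x"
  proof
    assume "x \<oplus> unitv i \<oplus> unitv j \<le> x"
    hence "x i + unitv i i + unitv j i \<le> x i" by (auto simp: le_fun_def vadd_def)
    thus False by (simp add: unitv_def)
  qed
  have xD: "x \<in> D" using sq_cube[OF assms(1)] by (simp add: D_def)
  have main: "\<not> violated g x i j"
    using xD notle[of i] notle[of j] notle2
    by (simp add: violated_def g_def D_def c_def)
  have rest: "\<not> violated g x' i' j'" if sq: "is_square n x' i' j'" and nv: "\<not> violated f x' i' j'" for x' i' j'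
  proof -
    let ?a = "x' \<oplus> unitv i'" and ?b = "x' \<oplus> unitv j'" and ?t = "x' \<oplus> unitv i' \<oplus> unitv j'"
    have ij': "i' \<noteq> j'" using sq by (simp add: is_square_def)
    note cb = sq_cube[OF sq]
    have "?a \<le> ?t" by (rule le_add_unit)
    have "?b \<le> ?t" by (simp add: le_fun_def vadd_def)
    have h1: "?a \<in> D \<Longrightarrow> x' \<in> D" using cb le_add_unit[of x' i'] by (auto simp: D_def intro: order_trans)
    have h2: "?b \<in> D \<Longrightarrow> x' \<in> D" using cb le_add_unit[of x' j'] by (auto simp: D_def intro: order_trans)
    have h3: "?a \<in> D \<Longrightarrow> ?b \<in> D \<Longrightarrow> ?t \<in> D" using cb both_le[OF ij'] by (auto simp: D_def)
    have h4: "?t \<in> D \<Longrightarrow> ?a \<in> D" using cb \<open>?a \<le> ?t\<close> by (auto simp: D_def intro: order_trans)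
    have h5: "?t \<in> D \<Longrightarrow> ?b \<in> D" using cb \<open>?b \<le> ?t\<close> by (auto simp: D_def intro: order_trans)
    have nv': "f x' + f ?t \<le> f ?a + f ?b" using nv by (simp add: violated_def)
    show ?thesis unfolding violated_def g_def
      apply (cases "x' \<in> D"; cases "?a \<in> D"; cases "?b \<in> D"; cases "?t \<in> D")
      using nv' cpos h1 h2 h3 h4 h5 by simp_all
  qed
  show ?thesis
    apply (rule exI[of _ c])
    using cpos main rest unfolding g_def D_def Let_def by blast
qed

end
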